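(* In the setting of the context, as $n\to\infty$, $$\mathbf P[K_0\ge h_n]\sim C_a\,\mathbf f'(q)^{h_n},\qquad C_a=\alpha q\,\frac{\mathbf m-\mathbf f'(q)}{1-q}.$$
   Context: $(p_k)_{k\ge0}$ is a probability distribution on $\{0,1,\dots\}$ with generating function $\mathbf f$, $p_0>0$, $\mathbf m:=\mathbf f'(1)\in(1,\infty)$, $\sum k^2p_k<\infty$; $q\in(0,1)$ is the extinction probability ($\mathbf f(q)=q$), so $0<\mathbf f'(q)<1$. $\mathbf P$ is the law of a Galton–Watson tree $T$ with offspring law $(p_k)$ and root $0$, conditioned on non-extinction. The backbone is the set of vertices with infinitely many descendants; a bud is a non-backbone child of a backbone vertex; for a bud child $y$ of a backbone vertex $x$, the trap rooted at $x$ consists of $x$, $y$ and the descendants of $y$, and its height is the largest distance from $y$ to a descendant of $y$. $K_0$ is the maximal height of a trap rooted at $0$ ($K_0=-\infty$ if there is none). $\mathbf Q$ is the law of a Galton–Watson tree with offspring law $q_k=p_kq^{k-1}$, $H$ its height, and $\alpha=\lim_n\mathbf Q[H\ge n]/\mathbf f'(q)^n\in(0,\infty)$ (this limit exists). For a fixed $\varepsilon\in(0,1)$, $h_n=\lceil(1-\varepsilon)\ln n/(-\ln\mathbf f'(q))\rceil$. *)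

theory Defs
  imports "HOL-Probability.Probability" "HOL-Library.Landau_Symbols"
begin

text \<open>Galton--Watson trees in Ulam--Harris encoding: a sample point
 \<open>\<omega> :: nat list \<Rightarrow> nat\<close> assigns to every word its number of children; the
 offspring numbers are i.i.d. with law \<open>p\<close>. The root is \<open>[]\<close>, the children
 of \<open>u\<close> are \<open>u @ [i]\<close> with \<open>i < \<omega> u\<close>.\<close>

definition gw_space :: "nat pmf \<Rightarrow> (nat list \<Rightarrow> nat) measure" where
  "gw_space p = PiM UNIV (\<lambda>_. measure_pmf p)"

definition gw_tree :: "(nat list \<Rightarrow> nat) \<Rightarrow> nat list set" where
  "gw_tree \<omega> = {u. \<forall>j < length u. u ! j < \<omega> (take j u)}"

definition desc :: "(nat list \<Rightarrow> nat) \<Rightarrow> nat list \<Rightarrow> nat list set" where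
  "desc \<omega> u = {v \<in> gw_tree \<omega>. \<exists>w. v = u @ w}"

definition survives :: "(nat list \<Rightarrow> nat) \<Rightarrow> bool" where
  "survives \<omega> \<longleftrightarrow> infinite (gw_tree \<omega>)"

definition backbone :: "(nat list \<Rightarrow> nat) \<Rightarrow> nat list set" where
  "backbone \<omega> = {u \<in> gw_tree \<omega>. infinite (desc \<omega> u)}"

definition buds :: "(nat list \<Rightarrow> nat) \<Rightarrow> nat list \<Rightarrow> nat set" where
  "buds \<omega> x = {i. x \<in> backbone \<omega> \<and> i < \<omega> x \<and> x @ [i] \<notin> backbone \<omega>}"

definition trap_height :: "(nat list \<Rightarrow> nat) \<Rightarrow> nat list \<Rightarrow> nat \<Rightarrow> nat" where
  "trap_height \<omega> x i = Max {length w | w. x @ [i] @ w \<in> gw_tree \<omega>}"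

definition K0 :: "(nat list \<Rightarrow> nat) \<Rightarrow> ereal" where
  "K0 \<omega> = (if buds \<omega> [] = {} then -\<infinity>
            else ereal (real (Max (trap_height \<omega> [] ` buds \<omega> []))))"

definition tree_height :: "(nat list \<Rightarrow> nat) \<Rightarrow> enat" where
  "tree_height \<omega> = (SUP u \<in> gw_tree \<omega>. enat (length u))"

definition gf :: "nat pmf \<Rightarrow> real \<Rightarrow> real" where
  "gf p x = (\<Sum>k. pmf p k * x ^ k)"

definition gf_deriv :: "nat pmf \<Rightarrow> real \<Rightarrow> real" where
  "gf_deriv p x = (\<Sum>k. real k * pmf p k * x ^ (k - 1))"

definition mean :: "nat pmf \<Rightarrow> real" where
  "mean p = (\<Sum>k. real k * pmf p k)"

definition ext_prob :: "nat pmf \<Rightarrow> real" where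
  "ext_prob p = measure (gw_space p) {\<omega> \<in> space (gw_space p). \<not> survives \<omega>}"

definition Pcond :: "nat pmf \<Rightarrow> (nat list \<Rightarrow> nat) set \<Rightarrow> real" where
  "Pcond p A = measure (gw_space p) (A \<inter> {\<omega> \<in> space (gw_space p). survives \<omega>})
               / measure (gw_space p) {\<omega> \<in> space (gw_space p). survives \<omega>}"

definition Qlaw :: "nat pmf \<Rightarrow> nat pmf" where
  "Qlaw p = embed_pmf (\<lambda>k. pmf p k * ext_prob p powi (int k - 1))"

end

theory Submission
  imports Defs
begin
definition subt :: "nat \<Rightarrow> (nat list \<Rightarrow> nat) \<Rightarrow> (nat list \<Rightarrow> nat)" where
  "subt i \<omega> = (\<lambda>u. \<omega> (i # u))"

lemma tree_Nil[simp]: "[] \<in> gw_tree \<omega>"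
  by (simp add: gw_tree_def)

lemma tree_ne[simp]: "gw_tree \<omega> \<noteq> {}"
  using tree_Nil by blast

lemma Cons_tree: "i # w \<in> gw_tree \<omega> \<longleftrightarrow> i < \<omega> [] \<and> w \<in> gw_tree (subt i \<omega>)"
  unfolding gw_tree_def subt_def by (simp add: All_less_Suc2)

lemma tree_decomp: "gw_tree \<omega> = insert [] (\<Union>i<\<omega> []. Cons i ` gw_tree (subt i \<omega>))"
proof (intro set_eqI iffI)
  fix u assume "u \<in> gw_tree \<omega>"
  then show "u \<in> insert [] (\<Union>i<\<omega> []. Cons i ` gw_tree (subt i \<omega>))"
    by (cases u) (auto simp: Cons_tree)
qed (auto simp: Cons_tree)

lemma finite_tree_iff: "finite (gw_tree \<omega>) \<longleftrightarrow> (\<forall>i<\<omega> []. finite (gw_tree (subt i \<omega>)))"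
proof -
  have "finite (gw_tree \<omega>) \<longleftrightarrow> finite (\<Union>i<\<omega> []. Cons i ` gw_tree (subt i \<omega>))"
    by (subst tree_decomp) simp
  also have "\<dots> \<longleftrightarrow> (\<forall>i<\<omega> []. finite (Cons i ` gw_tree (subt i \<omega>)))"
    by (simp add: finite_UN) (auto simp: Ball_def)
  also have "\<dots> \<longleftrightarrow> (\<forall>i<\<omega> []. finite (gw_tree (subt i \<omega>)))"
    by (simp add: finite_image_iff)
  finally show ?thesis .
qed

lemma Th_Suc: "(\<forall>u\<in>gw_tree \<omega>. length u < Suc h) \<longleftrightarrow> (\<forall>i<\<omega> []. \<forall>w\<in>gw_tree (subt i \<omega>). length w < h)"
  by (subst tree_decomp) auto

lemma Th_0: "\<not> (\<forall>u\<in>gw_tree \<omega>. length u < 0)"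
  using tree_Nil by blast

lemma finite_iff_Th: "finite (gw_tree \<omega>) \<longleftrightarrow> (\<exists>h. \<forall>u\<in>gw_tree \<omega>. length u < h)"
proof
  assume f: "finite (gw_tree \<omega>)"
  show "\<exists>h. \<forall>u\<in>gw_tree \<omega>. length u < h"
    by (rule exI[of _ "Suc (Max (length ` gw_tree \<omega>))"]) (use f in \<open>auto intro!: le_imp_less_Suc\<close>)
next
  assume "\<exists>h. \<forall>u\<in>gw_tree \<omega>. length u < h"
  then obtain h where "\<forall>u\<in>gw_tree \<omega>. length u < h" by blast
  then show "finite (gw_tree \<omega>)"
  proof (induction h arbitrary: \<omega>)
    case 0 then show ?case by auto
  next
    case (Suc h)
    then have "\<forall>i<\<omega> []. \<forall>w\<in>gw_tree (subt i \<omega>). length w < h" by (simp only: Th_Suc)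
    then have "\<forall>i<\<omega> []. finite (gw_tree (subt i \<omega>))" using Suc.IH by blast
    then show ?case using finite_tree_iff by blast
  qed
qed

lemma survives_iff: "survives \<omega> \<longleftrightarrow> (\<exists>i<\<omega> []. infinite (gw_tree (subt i \<omega>)))"
  unfolding survives_def using finite_tree_iff by blast

lemma desc_Nil: "desc \<omega> [] = gw_tree \<omega>"
  by (auto simp: desc_def)

lemma desc_single: "i < \<omega> [] \<Longrightarrow> desc \<omega> [i] = Cons i ` gw_tree (subt i \<omega>)"
  by (auto simp: desc_def Cons_tree)

lemma K0_iff:
  assumes "survives \<omega>"
  shows "K0 \<omega> \<ge> ereal (real h) \<longleftrightarrow>
     (\<exists>i<\<omega> []. finite (gw_tree (subt i \<omega>)) \<and> \<not> (\<forall>w\<in>gw_tree (subt i \<omega>). length w < h))" (is "?L \<longleftrightarrow> ?R")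
proof -
  have bb: "[] \<in> backbone \<omega>" using assms by (simp add: backbone_def desc_Nil survives_def)
  have buds: "buds \<omega> [] = {i. i < \<omega> [] \<and> finite (gw_tree (subt i \<omega>))}"
    using bb by (auto simp: buds_def backbone_def desc_single Cons_tree finite_image_iff)
  have fb: "finite (buds \<omega> [])" unfolding buds by auto
  have th: "trap_height \<omega> [] i \<ge> h \<longleftrightarrow> \<not> (\<forall>w\<in>gw_tree (subt i \<omega>). length w < h)"
    if i: "i < \<omega> []" and fin: "finite (gw_tree (subt i \<omega>))" for i
  proof -
    have eq: "{length w |w. [] @ [i] @ w \<in> gw_tree \<omega>} = length ` gw_tree (subt i \<omega>)"
      using i by (auto simp: Cons_tree)
    show ?thesis unfolding trap_height_def eq
      using fin tree_Nil[of "subt i \<omega>"] by (subst Max_ge_iff) (auto simp: not_less)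
  qed
  show ?thesis
  proof (cases "buds \<omega> [] = {}")
    case True
    have "\<not> K0 \<omega> \<ge> ereal (real h)" by (simp add: K0_def True)
    moreover have "\<forall>i<\<omega> []. infinite (gw_tree (subt i \<omega>))" using True unfolding buds by blast
    ultimately show ?thesis by blast
  next
    case False
    have "K0 \<omega> \<ge> ereal (real h) \<longleftrightarrow> Max (trap_height \<omega> [] ` buds \<omega> []) \<ge> h"
      using False by (simp add: K0_def)
    also have "\<dots> \<longleftrightarrow> (\<exists>i\<in>buds \<omega> []. trap_height \<omega> [] i \<ge> h)"
      using False fb by (subst Max_ge_iff) auto
    also have "\<dots> \<longleftrightarrow> ?R" using th unfolding buds by auto
    finally show ?thesis .
  qed
qed

abbreviation "CS \<equiv> PiM (UNIV::nat list set) (\<lambda>_. count_space (UNIV::nat set))"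

lemma sets_gw: "sets (gw_space r) = sets CS"
  unfolding gw_space_def by (rule sets_PiM_cong) auto

lemma space_gw[simp]: "space (gw_space r) = UNIV"
  by (auto simp: gw_space_def space_PiM PiE_def extensional_def)

lemma prob_gw: "prob_space (gw_space r)"
  unfolding gw_space_def by (rule prob_space_PiM) (rule prob_space_measure_pmf)

lemma meas_subt: "subt i \<in> measurable (gw_space r) (gw_space r)"
proof -
  have "(\<lambda>\<omega> u. (\<lambda>u \<omega>. \<omega> (i # u)) u \<omega>) \<in> measurable (PiM UNIV (\<lambda>_. measure_pmf r)) (PiM UNIV (\<lambda>_. measure_pmf r))"
    by (rule measurable_PiM_single') (auto simp: space_PiM)
  then show ?thesis by (simp add: subt_def[abs_def] gw_space_def)
qed

lemma distr_subt: "distr (gw_space r) (gw_space r) (subt i) = gw_space r"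
proof -
  have "distr (PiM UNIV (\<lambda>_. measure_pmf r)) (PiM UNIV (\<lambda>n. (\<lambda>_. measure_pmf r) (Cons i n)))
          (\<lambda>\<omega>. \<lambda>n\<in>UNIV. \<omega> (Cons i n)) = PiM UNIV (\<lambda>n. (\<lambda>_. measure_pmf r) (Cons i n))"
    by (rule distr_PiM_reindex) (auto intro: prob_space_measure_pmf)
  then show ?thesis by (simp add: gw_space_def subt_def[abs_def] restrict_UNIV)
qed

lemma prob_subt:
  assumes "B \<in> sets (gw_space r)"
  shows "measure (gw_space r) {\<omega>. subt i \<omega> \<in> B} = measure (gw_space r) B"
proof -
  have "measure (gw_space r) B = measure (distr (gw_space r) (gw_space r) (subt i)) B"
    by (simp add: distr_subt)
  also have "\<dots> = measure (gw_space r) (subt i -` B \<inter> space (gw_space r))"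
    by (rule measure_distr[OF meas_subt assms])
  finally show ?thesis by (simp add: vimage_def)
qed

lemma pps: "product_prob_space (\<lambda>_::nat list. measure_pmf r)"
  by unfold_locales

lemma prob_root: "measure (gw_space r) {\<omega>. \<omega> [] = k} = pmf r k"
proof -
  interpret product_prob_space "\<lambda>_::nat list. measure_pmf r" UNIV by (rule pps)
  have "measure (measure_pmf r) {k} = measure (distr (gw_space r) (measure_pmf r) (\<lambda>\<omega>. \<omega> [])) {k}"
    using PiM_component[of "[]"] by (simp add: gw_space_def)
  also have "\<dots> = measure (gw_space r) ((\<lambda>\<omega>. \<omega> []) -` {k} \<inter> space (gw_space r))"
    by (rule measure_distr) (auto simp: gw_space_def)
  finally show ?thesis by (simp add: measure_pmf_single vimage_def)
qed

lemma indep_coord: "prob_space.indep_vars (gw_space r) (\<lambda>_. measure_pmf r) (\<lambda>u \<omega>. \<omega> u) UNIV"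
proof -
  interpret Q: prob_space "gw_space r" by (rule prob_gw)
  interpret product_prob_space "\<lambda>_::nat list. measure_pmf r" UNIV by (rule pps)
  have rv: "\<And>i. (\<lambda>\<omega>. \<omega> i) \<in> measurable (gw_space r) (measure_pmf r)"
    by (simp add: gw_space_def)
  have "distr (gw_space r) (Pi\<^sub>M UNIV (\<lambda>i. measure_pmf r)) (\<lambda>x. x) = gw_space r"
    by (rule distr_id2) (simp add: gw_space_def)
  moreover have "\<And>i. distr (gw_space r) (measure_pmf r) (\<lambda>\<omega>. \<omega> i) = measure_pmf r"
    using PiM_component by (simp add: gw_space_def)
  ultimately have "distr (gw_space r) (Pi\<^sub>M UNIV (\<lambda>i. measure_pmf r)) (\<lambda>x. \<lambda>i\<in>UNIV. x i) =
      Pi\<^sub>M UNIV (\<lambda>i. distr (gw_space r) (measure_pmf r) (\<lambda>\<omega>. \<omega> i))"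
    by (simp add: restrict_UNIV gw_space_def)
  then show ?thesis
    using Q.indep_vars_iff_distr_eq_PiM[where I=UNIV and M'="\<lambda>_. measure_pmf r" and X="\<lambda>u \<omega>. \<omega> u", OF _ rv] by simp
qed

definition KK :: "nat option \<Rightarrow> nat list set" where
  "KK j = (case j of None \<Rightarrow> {[]} | Some i \<Rightarrow> range (Cons i))"

lemma indep_groups: "prob_space.indep_vars (gw_space r) (\<lambda>j. PiM (KK j) (\<lambda>_. measure_pmf r))
     (\<lambda>j \<omega>. restrict (\<lambda>u. \<omega> u) (KK j)) UNIV"
proof -
  interpret Q: prob_space "gw_space r" by (rule prob_gw)
  show ?thesis
    by (rule Q.indep_vars_restrict[OF indep_coord]) (auto simp: disjoint_family_on_def KK_def split: option.splits)
qed

lemma prob_Ek: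
  assumes B: "B \<in> sets (gw_space r)"
  shows "measure (gw_space r) {\<omega>. \<omega> [] = k \<and> (\<forall>i<k. subt i \<omega> \<in> B)} = pmf r k * measure (gw_space r) B ^ k"
proof -
  interpret Q: prob_space "gw_space r" by (rule prob_gw)
  define J where "J = insert None (Some ` {..<k})"
  define A where "A j = (case j of None \<Rightarrow> {f \<in> space (PiM (KK None) (\<lambda>_. measure_pmf r)). f [] = k}
      | Some i \<Rightarrow> {f \<in> space (PiM (KK (Some i)) (\<lambda>_. measure_pmf r)). (\<lambda>u. f (i # u)) \<in> B})" for j
  let ?X = "\<lambda>j \<omega>. restrict (\<lambda>u. \<omega> u) (KK j)"
  have Asets: "A j \<in> sets (PiM (KK j) (\<lambda>_. measure_pmf r))" for j
  proof (cases j)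
    case None
    have "(\<lambda>f. f []) \<in> measurable (PiM (KK None) (\<lambda>_. measure_pmf r)) (measure_pmf r)"
      by (rule measurable_component_singleton) (simp add: KK_def)
    from measurable_sets[OF this, of "{k}"] show ?thesis
      by (simp add: A_def None vimage_def Int_def conj_commute)
  next
    case (Some i)
    have "(\<lambda>f u. (\<lambda>u f. f (i # u)) u f) \<in> measurable (PiM (KK (Some i)) (\<lambda>_. measure_pmf r)) (PiM UNIV (\<lambda>_. measure_pmf r))"
      by (rule measurable_PiM_single') (auto simp: space_PiM KK_def)
    then have "(\<lambda>f u. f (i # u)) \<in> measurable (PiM (KK (Some i)) (\<lambda>_. measure_pmf r)) (gw_space r)"
      by (simp add: gw_space_def)
    from measurable_sets[OF this B] show ?thesis
      by (simp add: A_def Some vimage_def Int_def conj_commute)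
  qed
  have pre: "?X j -` A j \<inter> space (gw_space r) = (case j of None \<Rightarrow> {\<omega>. \<omega> [] = k} | Some i \<Rightarrow> {\<omega>. subt i \<omega> \<in> B})" for j
    by (cases j) (auto simp: A_def KK_def space_PiM subt_def[abs_def])
  have "(\<Inter>j\<in>J. ?X j -` A j \<inter> space (gw_space r)) = {\<omega>. \<omega> [] = k \<and> (\<forall>i<k. subt i \<omega> \<in> B)}"
    unfolding pre J_def by auto
  moreover have "measure (gw_space r) (\<Inter>j\<in>J. ?X j -` A j \<inter> space (gw_space r))
     = (\<Prod>j\<in>J. measure (gw_space r) (?X j -` A j \<inter> space (gw_space r)))"
    by (rule Q.indep_varsD[OF indep_groups]) (auto simp: J_def Asets)
  moreover have "(\<Prod>j\<in>J. measure (gw_space r) (?X j -` A j \<inter> space (gw_space r))) = pmf r k * measure (gw_space r) B ^ k"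
    unfolding pre J_def
    by (simp add: prod.reindex prob_root prob_subt[OF B])
  ultimately show ?thesis by simp
qed

lemma key:
  assumes B: "B \<in> sets (gw_space r)"
  shows "measure (gw_space r) {\<omega>. \<forall>i<\<omega> []. subt i \<omega> \<in> B} = gf r (measure (gw_space r) B)"
proof -
  interpret Q: prob_space "gw_space r" by (rule prob_gw)
  define E where "E k = {\<omega>. \<omega> [] = k \<and> (\<forall>i<k. subt i \<omega> \<in> B)}" for k
  have Es: "E k \<in> sets (gw_space r)" for k
  proof -
    have "{\<omega>. \<omega> [] = k} \<in> sets (gw_space r)"
      using measurable_sets[OF measurable_component_singleton[of "[]" UNIV "\<lambda>_. measure_pmf r"], of "{k}"]
      by (simp add: gw_space_def vimage_def space_PiM PiE_def extensional_def)
    moreover have "{\<omega>. subt i \<omega> \<in> B} \<in> sets (gw_space r)" for i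
      using measurable_sets[OF meas_subt B] by (simp add: vimage_def)
    ultimately have "{\<omega>. \<omega> [] = k} \<inter> (\<Inter>i<k. {\<omega>. subt i \<omega> \<in> B}) \<in> sets (gw_space r)"
      using sets.top[of "gw_space r"] by (intro sets.Int sets.countable_INT'') auto
    moreover have "E k = {\<omega>. \<omega> [] = k} \<inter> (\<Inter>i<k. {\<omega>. subt i \<omega> \<in> B})"
      by (auto simp: E_def)
    ultimately show ?thesis by simp
  qed
  have "(\<lambda>k. measure (gw_space r) (E k)) sums measure (gw_space r) (\<Union>k. E k)"
    by (rule Q.finite_measure_UNION) (use Es in \<open>auto simp: disjoint_family_on_def E_def\<close>)
  moreover have "(\<Union>k. E k) = {\<omega>. \<forall>i<\<omega> []. subt i \<omega> \<in> B}"
    by (auto simp: E_def)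
  ultimately have "(\<lambda>k. pmf r k * measure (gw_space r) B ^ k) sums measure (gw_space r) {\<omega>. \<forall>i<\<omega> []. subt i \<omega> \<in> B}"
    using prob_Ek[OF B] by (simp add: E_def)
  then show ?thesis by (simp add: gf_def sums_iff)
qed

definition Th :: "nat \<Rightarrow> (nat list \<Rightarrow> nat) set" where
  "Th h = {\<omega>. \<forall>u\<in>gw_tree \<omega>. length u < h}"

definition Fin :: "(nat list \<Rightarrow> nat) set" where
  "Fin = {\<omega>. finite (gw_tree \<omega>)}"

lemma Fin_UN: "Fin = (\<Union>h. Th h)"
  using finite_iff_Th by (auto simp: Fin_def Th_def)

lemma Th_inc: "incseq Th"
  by (auto simp: incseq_def Th_def)

lemma Th_sub_Fin: "Th h \<subseteq> Fin"
  unfolding Fin_UN by auto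

lemma Th_Suc_set: "Th (Suc h) = {\<omega>. \<forall>i<\<omega> []. subt i \<omega> \<in> Th h}"
  unfolding Th_def using Th_Suc by blast

lemma meas_all:
  assumes B: "B \<in> sets (gw_space r)"
  shows "{\<omega>. \<forall>i<\<omega> []. subt i \<omega> \<in> B} \<in> sets (gw_space r)"
proof -
  define E where "E k = {\<omega>. \<omega> [] = k} \<inter> (\<Inter>i<k. {\<omega>. subt i \<omega> \<in> B})" for k
  have Es: "E k \<in> sets (gw_space r)" for k
  proof -
    have "{\<omega>. \<omega> [] = k} \<in> sets (gw_space r)"
      using measurable_sets[OF measurable_component_singleton[of "[]" UNIV "\<lambda>_. measure_pmf r"], of "{k}"]
      by (simp add: gw_space_def vimage_def space_PiM PiE_def extensional_def)
    moreover have "{\<omega>. subt i \<omega> \<in> B} \<in> sets (gw_space r)" for i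
      using measurable_sets[OF meas_subt B] by (simp add: vimage_def)
    ultimately show ?thesis unfolding E_def
      using sets.top[of "gw_space r"] by (intro sets.Int sets.countable_INT'') auto
  qed
  have "{\<omega>. \<forall>i<\<omega> []. subt i \<omega> \<in> B} = (\<Union>k. E k)" by (auto simp: E_def)
  then show ?thesis using Es by auto
qed

lemma Th_sets[measurable]: "Th h \<in> sets (gw_space r)"
proof (induction h)
  case 0
  have "Th 0 = {}" unfolding Th_def using Th_0 by blast
  then show ?case by simp
next
  case (Suc h) then show ?case unfolding Th_Suc_set by (rule meas_all)
qed

lemma Fin_sets: "Fin \<in> sets (gw_space r)"
  unfolding Fin_UN by (intro sets.countable_UN) (auto simp: Th_sets)

lemma prob_Th: "measure (gw_space r) (Th h) = (gf r ^^ h) 0"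
proof (induction h)
  case 0
  have "Th 0 = {}" unfolding Th_def using Th_0 by blast
  then show ?case by simp
next
  case (Suc h)
  show ?case unfolding Th_Suc_set using key[OF Th_sets, of r h] Suc by simp
qed

lemma prob_Fin_lim: "(\<lambda>h. (gf r ^^ h) 0) \<longlonglongrightarrow> measure (gw_space r) Fin"
proof -
  interpret Q: prob_space "gw_space r" by (rule prob_gw)
  have "(\<lambda>h. measure (gw_space r) (Th h)) \<longlonglongrightarrow> measure (gw_space r) (\<Union>h. Th h)"
    by (rule Q.finite_Lim_measure_incseq) (auto simp: Th_inc Th_sets)
  then show ?thesis by (simp add: prob_Th Fin_UN)
qed

lemma ext_prob_Fin: "ext_prob r = measure (gw_space r) Fin"
  unfolding ext_prob_def Fin_def survives_def by simp

lemma S_eq: "{\<omega>. survives \<omega> \<and> K0 \<omega> \<ge> ereal (real h)} =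
   UNIV - ({\<omega>. \<forall>i<\<omega> []. subt i \<omega> \<in> Fin} \<union> {\<omega>. \<forall>i<\<omega> []. subt i \<omega> \<in> UNIV - (Fin - Th h)})"
proof -
  have "survives \<omega> \<and> K0 \<omega> \<ge> ereal (real h) \<longleftrightarrow>
    (\<exists>i<\<omega> []. subt i \<omega> \<notin> Fin) \<and> (\<exists>i<\<omega> []. subt i \<omega> \<in> Fin - Th h)" for \<omega>
    using K0_iff[of \<omega> h] survives_iff[of \<omega>] by (auto simp: Fin_def Th_def)
  then show ?thesis by auto
qed

lemma prob_S:
  "measure (gw_space r) {\<omega>. survives \<omega> \<and> K0 \<omega> \<ge> ereal (real h)} =
    1 - gf r (ext_prob r) - gf r (1 - (ext_prob r - (gf r ^^ h) 0)) + (gf r ^^ Suc h) 0"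
proof -
  interpret Q: prob_space "gw_space r" by (rule prob_gw)
  let ?M = "gw_space r"
  let ?U1 = "{\<omega>. \<forall>i<\<omega> []. subt i \<omega> \<in> Fin}"
  let ?U2 = "{\<omega>. \<forall>i<\<omega> []. subt i \<omega> \<in> UNIV - (Fin - Th h)}"
  have A: "Fin - Th h \<in> sets ?M" using Fin_sets Th_sets by auto
  have A2: "UNIV - (Fin - Th h) \<in> sets ?M" using A sets.compl_sets[OF A] by simp
  have pA: "measure ?M (Fin - Th h) = ext_prob r - (gf r ^^ h) 0"
    using Q.finite_measure_Diff[OF Fin_sets Th_sets Th_sub_Fin] by (simp add: prob_Th ext_prob_Fin)
  have pA2: "measure ?M (UNIV - (Fin - Th h)) = 1 - (ext_prob r - (gf r ^^ h) 0)"
    using Q.prob_compl[OF A] pA by simp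
  have U1: "?U1 \<in> sets ?M" by (rule meas_all[OF Fin_sets])
  have U2: "?U2 \<in> sets ?M" by (rule meas_all[OF A2])
  have I: "?U1 \<inter> ?U2 = Th (Suc h)" unfolding Th_Suc_set using Th_sub_Fin by auto
  have "measure ?M {\<omega>. survives \<omega> \<and> K0 \<omega> \<ge> ereal (real h)} = 1 - measure ?M (?U1 \<union> ?U2)"
    unfolding S_eq using Q.prob_compl[of "?U1 \<union> ?U2"] U1 U2 by simp
  also have "measure ?M (?U1 \<union> ?U2) = measure ?M ?U1 + measure ?M ?U2 - measure ?M (?U1 \<inter> ?U2)"
    using Q.finite_measure_Diff'[of ?U2 ?U1] Q.finite_measure_Union'[OF U1 U2] U1 U2 by (simp add: Int_commute)
  also have "\<dots> = gf r (ext_prob r) + gf r (1 - (ext_prob r - (gf r ^^ h) 0)) - (gf r ^^ Suc h) 0"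
    unfolding I using key[OF Fin_sets, of r] key[OF A2] pA2 prob_Th[of r "Suc h"]
    by (simp add: ext_prob_Fin)
  finally show ?thesis by simp
qed

lemma pow_upper:
  fixes x y :: real
  assumes "0 \<le> y" "y \<le> x"
  shows "x ^ k - y ^ k \<le> real k * x ^ (k - 1) * (x - y)"
proof (induction k)
  case 0 then show ?case by simp
next
  case (Suc k)
  have yk: "y ^ k \<le> x ^ k" using assms by (simp add: power_mono)
  have "x ^ Suc k - y ^ Suc k = x * (x ^ k - y ^ k) + y ^ k * (x - y)" by (simp add: algebra_simps)
  also have "\<dots> \<le> x * (real k * x ^ (k - 1) * (x - y)) + x ^ k * (x - y)"
    using Suc assms yk by (intro add_mono mult_left_mono mult_right_mono) auto
  also have "x * (real k * x ^ (k - 1) * (x - y)) = real k * x ^ k * (x - y)"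
    by (cases k) (auto simp: algebra_simps)
  finally show ?case by (simp add: algebra_simps)
qed

lemma pow_lower_y:
  fixes x y :: real
  assumes "0 \<le> y" "y \<le> x"
  shows "real k * y ^ (k - 1) * (x - y) \<le> x ^ k - y ^ k"
proof (induction k)
  case 0 then show ?case by simp
next
  case (Suc k)
  have yk: "y ^ k \<le> x ^ k" using assms by (simp add: power_mono)
  have "real (Suc k) * y ^ k * (x - y) = y * (real k * y ^ (k - 1) * (x - y)) + y ^ k * (x - y)"
    by (cases k) (auto simp: algebra_simps)
  also have "\<dots> \<le> x * (x ^ k - y ^ k) + y ^ k * (x - y)"
  proof -
    have "y * (real k * y ^ (k - 1) * (x - y)) \<le> y * (x ^ k - y ^ k)"
      using Suc assms by (intro mult_left_mono) auto
    also have "\<dots> \<le> x * (x ^ k - y ^ k)" using assms yk by (intro mult_right_mono) auto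
    finally show ?thesis by simp
  qed
  also have "\<dots> = x ^ Suc k - y ^ Suc k" by (simp add: algebra_simps)
  finally show ?case by simp
qed

lemma pow_lower_y_strict:
  fixes x y :: real
  assumes "0 \<le> y" "y < x" "2 \<le> k"
  shows "real k * y ^ (k - 1) * (x - y) < x ^ k - y ^ k"
  using assms(3)
proof (induction k rule: dec_induct)
  case base
  have "real 2 * y ^ (2 - 1) * (x - y) = 2 * y * (x - y)" by simp
  also have "\<dots> < (x + y) * (x - y)" using assms by (intro mult_strict_right_mono) auto
  also have "\<dots> = x ^ 2 - y ^ 2" by (simp add: algebra_simps power2_eq_square)
  finally show ?case .
next
  case (step k)
  have yk: "y ^ k \<le> x ^ k" using assms by (simp add: power_mono)
  have "real (Suc k) * y ^ k * (x - y) = y * (real k * y ^ (k - 1) * (x - y)) + y ^ k * (x - y)"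
    using step by (cases k) (auto simp: algebra_simps)
  also have "\<dots> \<le> x * (x ^ k - y ^ k) + y ^ k * (x - y)"
  proof -
    have "y * (real k * y ^ (k - 1) * (x - y)) \<le> y * (x ^ k - y ^ k)"
      using step assms by (intro mult_left_mono) auto
    also have "\<dots> \<le> x * (x ^ k - y ^ k)" using assms yk by (intro mult_right_mono) auto
    finally show ?thesis by simp
  qed
  also have "\<dots> = x ^ Suc k - y ^ Suc k" by (simp add: algebra_simps)
  finally have A: "real (Suc k) * y ^ k * (x - y) \<le> x ^ Suc k - y ^ Suc k" .
  have "real (Suc k) * y ^ k * (x - y) = y * (real k * y ^ (k - 1) * (x - y)) + y ^ k * (x - y)"
    using step by (cases k) (auto simp: algebra_simps)
  show ?case
  proof (cases "y = 0")
    case True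
    then show ?thesis using assms step by (simp add: power_0_left)
  next
    case False
    then have yp: "0 < y" using assms by simp
    have "y * (real k * y ^ (k - 1) * (x - y)) < y * (x ^ k - y ^ k)"
      using step yp by (intro mult_strict_left_mono) auto
    also have "\<dots> \<le> x * (x ^ k - y ^ k)" using assms yk by (intro mult_right_mono) auto
    finally have "y * (real k * y ^ (k - 1) * (x - y)) + y ^ k * (x - y) < x * (x ^ k - y ^ k) + y ^ k * (x - y)"
      by simp
    then show ?thesis using step by (cases k) (auto simp: algebra_simps)
  qed
qed

lemma pow_lower:
  fixes x y :: real
  assumes "0 \<le> y" "y \<le> x" "x \<le> 1"
  shows "real k * x ^ (k - 1) * (x - y) - (real k)\<^sup>2 * (x - y)\<^sup>2 \<le> x ^ k - y ^ k"
proof (induction k)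
  case 0 then show ?case by simp
next
  case (Suc k)
  define d where "d = x - y"
  define A where "A = x ^ k - y ^ k"
  have d: "0 \<le> d" using assms by (simp add: d_def)
  have xk1: "x ^ (k - 1) \<le> 1" using assms by (simp add: power_le_one)
  have up: "A \<le> real k * d"
  proof -
    have "A \<le> real k * x ^ (k - 1) * d" unfolding A_def d_def by (rule pow_upper) (use assms in auto)
    also have "\<dots> \<le> real k * 1 * d" using xk1 d by (intro mult_right_mono mult_left_mono) auto
    finally show ?thesis by simp
  qed
  have IH: "real k * x ^ (k - 1) * d - (real k)\<^sup>2 * d\<^sup>2 \<le> A" using Suc by (simp add: A_def d_def)
  have h1: "x * (real k * x ^ (k - 1) * d - (real k)\<^sup>2 * d\<^sup>2) \<le> x * A"
    using IH assms by (intro mult_left_mono) auto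
  have h2: "x * (real k * x ^ (k - 1) * d - (real k)\<^sup>2 * d\<^sup>2) = real k * x ^ k * d - x * ((real k)\<^sup>2 * d\<^sup>2)"
    by (cases k) (auto simp: algebra_simps)
  have h3: "x * ((real k)\<^sup>2 * d\<^sup>2) \<le> (real k)\<^sup>2 * d\<^sup>2"
    using assms by (intro mult_left_le_one_le) auto
  have h4: "A * d \<le> real k * d * d" using up d by (intro mult_right_mono) auto
  have h5: "y ^ k * d = x ^ k * d - A * d" by (simp add: A_def algebra_simps)
  have E1: "x ^ Suc k - y ^ Suc k = x * A + y ^ k * d" by (simp add: A_def d_def algebra_simps)
  have h6: "real (Suc k) * x ^ (Suc k - 1) * d - (real (Suc k))\<^sup>2 * d\<^sup>2
      = real k * x ^ k * d + x ^ k * d - (real k)\<^sup>2 * d\<^sup>2 - 2 * (real k * d\<^sup>2) - d\<^sup>2"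
    by (simp add: algebra_simps power2_eq_square)
  have h7: "real k * d * d = real k * d\<^sup>2" by (simp add: power2_eq_square)
  have h8: "0 \<le> real k * d\<^sup>2" "0 \<le> d\<^sup>2" by auto
  have "real (Suc k) * x ^ (Suc k - 1) * d - (real (Suc k))\<^sup>2 * d\<^sup>2 \<le> x ^ Suc k - y ^ Suc k"
    unfolding h6 E1 using h1 h2 h3 h4 h5 h7 h8 by linarith
  then show ?case by (simp add: d_def)
qed

lemma pmf_sums: "pmf p sums 1"
proof -
  have "(\<lambda>k. measure (measure_pmf p) {k}) sums measure (measure_pmf p) (\<Union>k. {k})"
    by (rule measure_pmf.finite_measure_UNION) (auto simp: disjoint_family_on_def)
  then show ?thesis by (simp add: measure_pmf_single)
qed

lemma pmf_summable: "summable (pmf p)"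
  using pmf_sums sums_summable by blast

lemma gf_summable: "0 \<le> s \<Longrightarrow> s \<le> 1 \<Longrightarrow> summable (\<lambda>k. pmf p k * s ^ k)"
  by (rule summable_comparison_test[OF _ pmf_summable[of p]])
     (auto intro!: exI[of _ 0] mult_right_le_one_le power_le_one simp: abs_mult)

lemma gf_sums: "0 \<le> s \<Longrightarrow> s \<le> 1 \<Longrightarrow> (\<lambda>k. pmf p k * s ^ k) sums gf p s"
  unfolding gf_def using gf_summable summable_sums by blast

lemma gf_one: "gf p 1 = 1"
  using pmf_sums by (simp add: gf_def sums_iff)

lemma gf_zero: "gf p 0 = pmf p 0"
  unfolding gf_def by (rule powser_zero)

locale sm =
  fixes p :: "nat pmf"
  assumes sm: "summable (\<lambda>k. (real k)\<^sup>2 * pmf p k)"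
begin

definition M2 where "M2 = (\<Sum>k. (real k)\<^sup>2 * pmf p k)"

lemma M2_sums: "(\<lambda>k. (real k)\<^sup>2 * pmf p k) sums M2"
  unfolding M2_def using sm summable_sums by blast

lemma M2_nonneg: "0 \<le> M2"
  unfolding M2_def by (rule suminf_nonneg[OF sm]) auto

lemma gfd_summable: "0 \<le> s \<Longrightarrow> s \<le> 1 \<Longrightarrow> summable (\<lambda>k. real k * pmf p k * s ^ (k - 1))"
proof (rule summable_comparison_test[OF _ sm])
  assume s: "0 \<le> s" "s \<le> 1"
  have "real k * pmf p k * s ^ (k - 1) \<le> (real k)\<^sup>2 * pmf p k" for k
  proof -
    have "real k * pmf p k * s ^ (k - 1) \<le> real k * pmf p k * 1"
      using s by (intro mult_left_mono power_le_one) auto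
    note this
    also have "\<dots> \<le> (real k)\<^sup>2 * pmf p k"
      by (cases k) (auto simp: power2_eq_square intro!: mult_right_mono mult_le_cancel_right1[THEN iffD2])
    finally show ?thesis .
  qed
  note B = this
  show "\<exists>N. \<forall>n\<ge>N. norm (real n * pmf p n * s ^ (n - 1)) \<le> (real n)\<^sup>2 * pmf p n"
  proof (intro exI allI impI)
    fix n :: nat
    have "0 \<le> real n * pmf p n * s ^ (n - 1)" using s by simp
    then show "norm (real n * pmf p n * s ^ (n - 1)) \<le> (real n)\<^sup>2 * pmf p n"
      using B[of n] by simp
  qed
qed

lemma gfd_sums: "0 \<le> s \<Longrightarrow> s \<le> 1 \<Longrightarrow> (\<lambda>k. real k * pmf p k * s ^ (k - 1)) sums gf_deriv p s"
  unfolding gf_deriv_def using gfd_summable summable_sums by blast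

lemma mean_eq: "gf_deriv p 1 = mean p"
  by (simp add: gf_deriv_def mean_def)

lemma gfd_nonneg: "0 \<le> s \<Longrightarrow> s \<le> 1 \<Longrightarrow> 0 \<le> gf_deriv p s"
  unfolding gf_deriv_def by (rule suminf_nonneg[OF gfd_summable]) auto

lemma gfd_le_mean: "0 \<le> s \<Longrightarrow> s \<le> 1 \<Longrightarrow> gf_deriv p s \<le> mean p"
proof -
  assume s: "0 \<le> s" "s \<le> 1"
  have "real k * pmf p k * s ^ (k - 1) \<le> real k * pmf p k * 1 ^ (k - 1)" for k
    using s by (intro mult_left_mono power_mono) auto
  then show ?thesis unfolding mean_eq[symmetric]
    by (intro sums_le[OF _ gfd_sums[OF s] gfd_sums]) auto
qed

lemma gf_diff_upper:
  assumes "0 \<le> y" "y \<le> x" "x \<le> 1"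
  shows "gf p x - gf p y \<le> gf_deriv p x * (x - y)"
proof (rule sums_le)
  show "(\<lambda>k. pmf p k * x ^ k - pmf p k * y ^ k) sums (gf p x - gf p y)"
    using assms by (intro sums_diff gf_sums) auto
  show "(\<lambda>k. real k * pmf p k * x ^ (k - 1) * (x - y)) sums (gf_deriv p x * (x - y))"
    using assms by (intro sums_mult2 gfd_sums) auto
  show "\<And>k. pmf p k * x ^ k - pmf p k * y ^ k \<le> real k * pmf p k * x ^ (k - 1) * (x - y)"
  proof -
    fix k
    have "pmf p k * (x ^ k - y ^ k) \<le> pmf p k * (real k * x ^ (k - 1) * (x - y))"
      using pow_upper[of y x k] assms by (intro mult_left_mono) auto
    then show "pmf p k * x ^ k - pmf p k * y ^ k \<le> real k * pmf p k * x ^ (k - 1) * (x - y)"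
      by (simp add: algebra_simps)
  qed
qed

lemma gf_diff_lower_y:
  assumes "0 \<le> y" "y \<le> x" "x \<le> 1"
  shows "gf_deriv p y * (x - y) \<le> gf p x - gf p y"
proof (rule sums_le)
  show "(\<lambda>k. pmf p k * x ^ k - pmf p k * y ^ k) sums (gf p x - gf p y)"
    using assms by (intro sums_diff gf_sums) auto
  show "(\<lambda>k. real k * pmf p k * y ^ (k - 1) * (x - y)) sums (gf_deriv p y * (x - y))"
    using assms by (intro sums_mult2 gfd_sums) auto
  show "\<And>k. real k * pmf p k * y ^ (k - 1) * (x - y) \<le> pmf p k * x ^ k - pmf p k * y ^ k"
  proof -
    fix k
    have "pmf p k * (real k * y ^ (k - 1) * (x - y)) \<le> pmf p k * (x ^ k - y ^ k)"
      using pow_lower_y[of y x k] assms by (intro mult_left_mono) auto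
    then show "real k * pmf p k * y ^ (k - 1) * (x - y) \<le> pmf p k * x ^ k - pmf p k * y ^ k"
      by (simp add: algebra_simps)
  qed
qed

lemma gf_diff_lower:
  assumes "0 \<le> y" "y \<le> x" "x \<le> 1"
  shows "gf_deriv p x * (x - y) - M2 * (x - y)\<^sup>2 \<le> gf p x - gf p y"
proof (rule sums_le)
  show "(\<lambda>k. pmf p k * x ^ k - pmf p k * y ^ k) sums (gf p x - gf p y)"
    using assms by (intro sums_diff gf_sums) auto
  show "(\<lambda>k. real k * pmf p k * x ^ (k - 1) * (x - y) - (real k)\<^sup>2 * pmf p k * (x - y)\<^sup>2)
     sums (gf_deriv p x * (x - y) - M2 * (x - y)\<^sup>2)"
    using assms by (intro sums_diff sums_mult2 gfd_sums M2_sums) auto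
  show "\<And>k. real k * pmf p k * x ^ (k - 1) * (x - y) - (real k)\<^sup>2 * pmf p k * (x - y)\<^sup>2 \<le> pmf p k * x ^ k - pmf p k * y ^ k"
  proof -
    fix k
    have "pmf p k * (real k * x ^ (k - 1) * (x - y) - (real k)\<^sup>2 * (x - y)\<^sup>2) \<le> pmf p k * (x ^ k - y ^ k)"
      using pow_lower[of y x k] assms by (intro mult_left_mono) auto
    then show "real k * pmf p k * x ^ (k - 1) * (x - y) - (real k)\<^sup>2 * pmf p k * (x - y)\<^sup>2 \<le> pmf p k * x ^ k - pmf p k * y ^ k"
      by (simp add: algebra_simps)
  qed
qed

lemma gf_mono: "0 \<le> y \<Longrightarrow> y \<le> x \<Longrightarrow> x \<le> 1 \<Longrightarrow> gf p y \<le> gf p x"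
  using gf_diff_lower_y[of y x] gfd_nonneg[of y] by (smt (verit) mult_nonneg_nonneg)

lemma gf_range: "0 \<le> s \<Longrightarrow> s \<le> 1 \<Longrightarrow> 0 \<le> gf p s \<and> gf p s \<le> 1"
proof -
  assume s: "0 \<le> s" "s \<le> 1"
  have "0 \<le> pmf p 0" by simp
  then show ?thesis using gf_mono[of 0 s] gf_mono[of s 1] gf_one[of p] gf_zero[of p] s by linarith
qed

lemma gf_lip: "0 \<le> y \<Longrightarrow> y \<le> x \<Longrightarrow> x \<le> 1 \<Longrightarrow> gf p x - gf p y \<le> mean p * (x - y)"
  using gf_diff_upper[of y x] gfd_le_mean[of x] by (smt (verit) mult_right_mono)

end

locale gwp = sm +
  fixes q :: real
  assumes p0: "pmf p 0 > 0" and m_gt: "mean p > 1"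
    and lim: "(\<lambda>h. (gf p ^^ h) 0) \<longlonglongrightarrow> q"
begin

abbreviation "e h \<equiv> (gf p ^^ h) 0"
abbreviation "f \<equiv> gf p"
abbreviation "m \<equiv> mean p"

lemma e_Suc: "e (Suc h) = f (e h)" by simp

lemma e_range: "0 \<le> e h \<and> e h \<le> 1"
  by (induction h) (auto dest: gf_range)

lemma e_inc: "e h \<le> e (Suc h)"
proof (induction h)
  case 0 then show ?case using e_range[of 1] by simp
next
  case (Suc h) then show ?case
    using gf_mono[of "e h" "e (Suc h)"] e_range[of h] e_range[of "Suc h"] by simp
qed

lemma e_incseq: "incseq e"
  by (rule incseq_SucI) (rule e_inc)

lemma e_le_q: "e h \<le> q"
  by (rule incseq_le[OF e_incseq lim])

lemma q_range: "0 \<le> q" "q \<le> 1"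
  using e_le_q[of 0] LIMSEQ_le_const2[OF lim, of 1] e_range by auto

lemma q_pos: "0 < q"
proof -
  have "e 1 = pmf p 0" by (simp add: gf_zero)
  then show ?thesis using p0 e_le_q[of 1] by simp
qed

lemma gf_q: "f q = q"
proof -
  have "(\<lambda>h. f (e h)) \<longlonglongrightarrow> f q"
  proof -
    have "(\<lambda>h. f q - f (e h)) \<longlonglongrightarrow> 0"
    proof (rule tendsto_sandwich[of "\<lambda>_. 0" _ _ "\<lambda>h. m * (q - e h)"])
      show "\<forall>\<^sub>F h in sequentially. 0 \<le> f q - f (e h)"
        using gf_mono e_range e_le_q q_range by (auto simp: algebra_simps)
      show "\<forall>\<^sub>F h in sequentially. f q - f (e h) \<le> m * (q - e h)"
        using gf_lip e_range e_le_q q_range by auto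
      show "(\<lambda>h. m * (q - e h)) \<longlonglongrightarrow> 0"
        using tendsto_mult[OF tendsto_const[of m] tendsto_diff[OF tendsto_const[of q] lim]] by simp
    qed simp
    then have "(\<lambda>h. f q - (f q - f (e h))) \<longlonglongrightarrow> f q - 0"
      by (intro tendsto_diff tendsto_const)
    then show ?thesis by simp
  qed
  moreover have "(\<lambda>h. f (e h)) \<longlonglongrightarrow> q"
    using LIMSEQ_Suc[OF lim] by simp
  ultimately show ?thesis using LIMSEQ_unique by blast
qed

lemma M2_ge_mean: "m \<le> M2"
proof (rule sums_le[OF _ _ M2_sums])
  show "(\<lambda>k. real k * pmf p k) sums m"
    using gfd_sums[of 1] mean_eq by simp
  show "\<And>k. real k * pmf p k \<le> (real k)\<^sup>2 * pmf p k"
  proof -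
    fix k
    have "real k \<le> (real k)\<^sup>2" by (cases k) (auto simp: power2_eq_square)
    then show "real k * pmf p k \<le> (real k)\<^sup>2 * pmf p k" by (intro mult_right_mono) auto
  qed
qed

lemma q_lt_1: "q < 1"
proof -
  define a where "a = (m - 1) / (2 * M2)"
  have M2p: "0 < M2" using M2_ge_mean m_gt by simp
  have a0: "0 < a" using m_gt M2p by (simp add: a_def)
  have a1: "a \<le> 1 / 2" using M2_ge_mean m_gt M2p by (simp add: a_def field_simps)
  have Ma: "M2 * a = (m - 1) / 2" using M2p by (simp add: a_def field_simps)
  have "gf_deriv p 1 * (1 - (1 - a)) - M2 * (1 - (1 - a))\<^sup>2 \<le> f 1 - f (1 - a)"
    by (rule gf_diff_lower) (use a1 a0 in auto)
  then have "m * a - M2 * a * a \<le> 1 - f (1 - a)"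
    by (simp add: mean_eq gf_one power2_eq_square)
  then have "m * a - (m - 1) / 2 * a \<le> 1 - f (1 - a)" by (simp add: Ma)
  moreover have "a < m * a - (m - 1) / 2 * a"
  proof -
    have "m * a - (m - 1) / 2 * a = a * ((m + 1) / 2)" by (simp add: field_simps)
    also have "\<dots> > a * 1" using a0 m_gt by (intro mult_strict_left_mono) auto
    finally show ?thesis by simp
  qed
  ultimately have fs: "f (1 - a) < 1 - a" by simp
  have "e h \<le> 1 - a" for h
  proof (induction h)
    case 0 then show ?case using a1 by simp
  next
    case (Suc h)
    have "f (e h) \<le> f (1 - a)" using Suc e_range[of h] a1 a0 by (intro gf_mono) auto
    then show ?case using fs by simp
  qed
  then have "q \<le> 1 - a" by (intro LIMSEQ_le_const2[OF lim]) auto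
  then show ?thesis using a0 by simp
qed

end

context gwp begin

lemma exists_k0: "\<exists>k0\<ge>2. pmf p k0 > 0"
proof (rule ccontr)
  assume "\<not> ?thesis"
  then have z: "\<And>k. k \<ge> 2 \<Longrightarrow> pmf p k = 0" using pmf_nonneg[of p] by (metis less_eq_real_def)
  have "m = (\<Sum>k. real k * pmf p k)" by (simp add: mean_def)
  also have "\<dots> = (\<Sum>k\<in>{1}. real k * pmf p k)"
  proof (rule suminf_finite)
    fix k :: nat assume "k \<notin> {1}"
    then have "k = 0 \<or> k \<ge> 2" by auto
    then show "real k * pmf p k = 0" using z by auto
  qed simp
  also have "\<dots> \<le> 1" by (simp add: pmf_le_1)
  finally show False using m_gt by simp
qed

lemma gf_strict: assumes "0 \<le> y" "y < x" "x \<le> 1" shows "f y < f x"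
proof -
  obtain k0 where k0: "k0 \<ge> 2" "pmf p k0 > 0" using exists_k0 by blast
  have s: "(\<lambda>k. pmf p k * x ^ k - pmf p k * y ^ k) sums (f x - f y)"
    using assms by (intro sums_diff gf_sums) auto
  have "0 < f x - f y"
  proof (rule suminf_pos2[of "\<lambda>k. pmf p k * x ^ k - pmf p k * y ^ k" k0, unfolded sums_unique[OF s, symmetric]])
    show "summable (\<lambda>k. pmf p k * x ^ k - pmf p k * y ^ k)" using s sums_summable by blast
    show "\<And>n. 0 \<le> pmf p n * x ^ n - pmf p n * y ^ n"
    proof -
      fix n
      have "pmf p n * y ^ n \<le> pmf p n * x ^ n" using assms by (intro mult_left_mono power_mono) auto
      then show "0 \<le> pmf p n * x ^ n - pmf p n * y ^ n" by simp
    qed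
    have "y ^ k0 < x ^ k0" using assms k0 by (intro power_strict_mono) auto
    then show "0 < pmf p k0 * x ^ k0 - pmf p k0 * y ^ k0" using k0 by (simp add: algebra_simps)
  qed
  then show ?thesis by simp
qed

abbreviation "\<mu> \<equiv> gf_deriv p q"

lemma mu_pos: "0 < \<mu>"
proof -
  obtain k0 where k0: "k0 \<ge> 2" "pmf p k0 > 0" using exists_k0 by blast
  show ?thesis unfolding gf_deriv_def
  proof (rule suminf_pos2[OF gfd_summable])
    show "0 \<le> q" "q \<le> 1" using q_range by auto
    show "\<And>n. 0 \<le> real n * pmf p n * q ^ (n - 1)" using q_range by simp
    show "0 < real k0 * pmf p k0 * q ^ (k0 - 1)" using k0 q_pos by simp
  qed
qed

lemma mu_lt_1: "\<mu> < 1"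
proof -
  obtain k0 where k0: "k0 \<ge> 2" "pmf p k0 > 0" using exists_k0 by blast
  define t where "t k = pmf p k * 1 ^ k - pmf p k * q ^ k - real k * pmf p k * q ^ (k - 1) * (1 - q)" for k
  have s: "t sums (f 1 - f q - \<mu> * (1 - q))"
    unfolding t_def using q_range by (intro sums_diff sums_mult2 gf_sums gfd_sums) auto
  have "0 < suminf t"
  proof (rule suminf_pos2)
    show "summable t" using s sums_summable by blast
    show "0 \<le> t n" for n
    proof -
      have "pmf p n * (real n * q ^ (n - 1) * (1 - q)) \<le> pmf p n * (1 ^ n - q ^ n)"
        using pow_lower_y[of q 1 n] q_range by (intro mult_left_mono) auto
      then show ?thesis by (simp add: t_def algebra_simps)
    qed
    show "0 < t k0"
    proof -
      have "pmf p k0 * (real k0 * q ^ (k0 - 1) * (1 - q)) < pmf p k0 * (1 ^ k0 - q ^ k0)"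
        using pow_lower_y_strict[of q 1 k0] q_range q_lt_1 k0 by (intro mult_strict_left_mono) auto
      then show ?thesis by (simp add: t_def algebra_simps)
    qed
  qed
  then have "0 < 1 - q - \<mu> * (1 - q)" using sums_unique[OF s] gf_one gf_q by simp
  then have "\<mu> * (1 - q) < 1 * (1 - q)" by simp
  then show ?thesis using q_lt_1 by (simp only: mult_less_cancel_right)
qed

lemma mu_lt_m: "\<mu> < m" using mu_lt_1 m_gt by simp

abbreviation "a h \<equiv> q - e h"

lemma a_pos: "0 < a h"
proof (induction h)
  case 0 then show ?case using q_pos by simp
next
  case (Suc h)
  have "f (e h) < f q" using Suc e_range[of h] q_range by (intro gf_strict) auto
  then show ?case using gf_q by simp
qed

lemma a_le_q: "a h \<le> q" using e_range[of h] by simp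

lemma a_lim: "a \<longlonglongrightarrow> 0"
  using tendsto_diff[OF tendsto_const[of q] lim] by simp

lemma a_Suc_upper: "a (Suc h) \<le> \<mu> * a h"
  using gf_diff_upper[of "e h" q] e_le_q[of h] e_range[of h] q_range gf_q by simp

lemma a_Suc_lower: "\<mu> * a h - M2 * (a h)\<^sup>2 \<le> a (Suc h)"
  using gf_diff_lower[of "e h" q] e_le_q[of h] e_range[of h] q_range gf_q by simp

lemma a_le_geom: "a h \<le> q * \<mu> ^ h"
proof (induction h)
  case 0 then show ?case by simp
next
  case (Suc h)
  have "a (Suc h) \<le> \<mu> * a h" by (rule a_Suc_upper)
  also have "\<dots> \<le> \<mu> * (q * \<mu> ^ h)" using Suc mu_pos by (intro mult_left_mono) auto
  finally show ?case by (simp add: algebra_simps)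
qed

end

lemma S_Suc_gen:
  fixes c mu :: real assumes "mu < 1"
  shows "c * (mu ^ J - mu ^ Suc h) / (1 - mu) = c * (mu ^ J - mu ^ h) / (1 - mu) + c * mu ^ h"
proof -
  have ne: "1 - mu \<noteq> 0" using assms by simp
  have "c * mu ^ h = c * mu ^ h * (1 - mu) / (1 - mu)" using ne by simp
  then have "c * (mu ^ J - mu ^ h) / (1 - mu) + c * mu ^ h = (c * (mu ^ J - mu ^ h) + c * mu ^ h * (1 - mu)) / (1 - mu)"
    by (metis add_divide_distrib)
  also have "c * (mu ^ J - mu ^ h) + c * mu ^ h * (1 - mu) = c * (mu ^ J - mu ^ Suc h)"
    by (simp add: algebra_simps)
  finally show ?thesis by simp
qed
lemma S_le_gen:
  fixes c mu :: real assumes "mu < 1" "c * mu ^ J < (1 - mu) / 2"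
  shows "c * mu ^ J / (1 - mu) \<le> 1 / 2"
proof -
  have "0 < 1 - mu" using assms by simp
  then show ?thesis using assms(2) by (simp add: pos_divide_le_eq)
qed

lemma alg_id:
  fixes P A M Q D Al :: real
  assumes "A \<noteq> 0" "M \<noteq> 0" "1 - Q \<noteq> 0" "D \<noteq> 0" "Q * Al \<noteq> 0"
  shows "(P / A) * (A / M) / (D * (Q * Al)) = (P / (1 - Q)) / ((Al * Q * D / (1 - Q)) * M)"
proof -
  have 1: "(P / A) * (A / M) = P / M" using assms(1) by simp
  have 2: "(Al * Q * D / (1 - Q)) * M = (Al * Q * D * M) / (1 - Q)" by simp
  have 3: "(P / (1 - Q)) / ((Al * Q * D * M) / (1 - Q)) = P / (Al * Q * D * M)"
    using assms(3) by (simp add: divide_divide_eq_left)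
  show ?thesis unfolding 1 2 3 by (simp add: divide_divide_eq_left mult_ac)
qed

context gwp begin

definition P :: "nat \<Rightarrow> real" where
  "P h = 1 - f q - f (1 - a h) + e (Suc h)"

lemma P_bound: "\<bar>P h - (m - \<mu>) * a h\<bar> \<le> M2 * (a h)\<^sup>2"
proof -
  have r: "0 \<le> e h" "e h \<le> q" "q \<le> 1" "0 \<le> q" using e_range[of h] e_le_q[of h] q_range by auto
  have 1: "f 1 - f (1 - a h) \<le> m * a h"
    using gf_diff_upper[of "1 - a h" 1] r by (simp add: mean_eq)
  have 2: "m * a h - M2 * (a h)\<^sup>2 \<le> f 1 - f (1 - a h)"
    using gf_diff_lower[of "1 - a h" 1] r by (simp add: mean_eq)
  have 3: "f q - f (e h) \<le> \<mu> * a h"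
    using gf_diff_upper[of "e h" q] r by simp
  have 4: "\<mu> * a h - M2 * (a h)\<^sup>2 \<le> f q - f (e h)"
    using gf_diff_lower[of "e h" q] r by simp
  have "P h = (f 1 - f (1 - a h)) - (f q - f (e h))"
    by (simp add: P_def gf_one gf_q)
  then show ?thesis using 1 2 3 4 by (simp add: abs_le_iff algebra_simps)
qed

lemma P_ratio: "(\<lambda>h. P h / a h) \<longlonglongrightarrow> m - \<mu>"
proof -
  have "(\<lambda>h. P h / a h - (m - \<mu>)) \<longlonglongrightarrow> 0"
  proof (rule Lim_null_comparison)
    show "\<forall>\<^sub>F h in sequentially. norm (P h / a h - (m - \<mu>)) \<le> M2 * a h"
    proof (intro always_eventually allI)
      fix h
      have ap: "0 < a h" by (rule a_pos)
      have "P h / a h - (m - \<mu>) = (P h - (m - \<mu>) * a h) / a h" using ap by (simp add: field_simps)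
      then have "norm (P h / a h - (m - \<mu>)) = \<bar>P h - (m - \<mu>) * a h\<bar> / a h" using ap by simp
      also have "\<dots> \<le> M2 * (a h)\<^sup>2 / a h" using P_bound ap by (intro divide_right_mono) auto
      also have "\<dots> = M2 * a h" using ap by (simp add: power2_eq_square)
      finally show "norm (P h / a h - (m - \<mu>)) \<le> M2 * a h" .
    qed
    show "(\<lambda>h. M2 * a h) \<longlonglongrightarrow> 0" using tendsto_mult[OF tendsto_const[of M2] a_lim] by simp
  qed
  then have "(\<lambda>h. P h / a h - (m - \<mu>) + (m - \<mu>)) \<longlonglongrightarrow> 0 + (m - \<mu>)"
    by (intro tendsto_add tendsto_const)
  then show ?thesis by simp
qed

abbreviation "v h \<equiv> a h / \<mu> ^ h"

lemma v_rec: "v h * (1 - M2 * q / \<mu> * \<mu> ^ h) \<le> v (Suc h)"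
proof -
  have mp: "0 < \<mu>" by (rule mu_pos)
  have "M2 * (a h)\<^sup>2 \<le> M2 * a h * (q * \<mu> ^ h)"
    using a_le_geom[of h] a_pos[of h] M2_nonneg
    by (simp add: power2_eq_square mult.assoc mult_left_mono)
  then have "\<mu> * a h - M2 * a h * (q * \<mu> ^ h) \<le> a (Suc h)" using a_Suc_lower[of h] by simp
  then have "(\<mu> * a h - M2 * a h * (q * \<mu> ^ h)) / \<mu> ^ Suc h \<le> v (Suc h)"
    using mp by (intro divide_right_mono) auto
  moreover have "(\<mu> * a h - M2 * a h * (q * \<mu> ^ h)) / \<mu> ^ Suc h = v h * (1 - M2 * q / \<mu> * \<mu> ^ h)"
    using mp by (simp add: field_simps)
  ultimately show ?thesis by simp
qed

lemma v_lower: "\<exists>J. \<forall>h\<ge>J. v J / 2 \<le> v h"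
proof -
  define c where "c = M2 * q / \<mu>"
  have mp: "0 < \<mu>" by (rule mu_pos)
  have c0: "0 \<le> c" using M2_nonneg q_range mp by (simp add: c_def)
  have l0: "(\<lambda>n. c * \<mu> ^ n) \<longlonglongrightarrow> c * 0"
    using mp mu_lt_1 by (intro tendsto_mult tendsto_const LIMSEQ_power_zero) auto
  have l1: "(\<lambda>n. c * \<mu> ^ n) \<longlonglongrightarrow> 0" using l0 by (simp only: mult_zero_right)
  have "0 < (1 - \<mu>) / 2" using mu_lt_1 by simp
  from order_tendstoD(2)[OF l1 this]
  have "\<forall>\<^sub>F n in sequentially. c * \<mu> ^ n < (1 - \<mu>) / 2" .
  then obtain N where N: "\<forall>n\<ge>N. c * \<mu> ^ n < (1 - \<mu>) / 2"
    unfolding eventually_sequentially by blast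
  define J where "J = N"
  have J: "c * \<mu> ^ J < (1 - \<mu>) / 2" using N by (simp add: J_def)
  define S where "S h = c * (\<mu> ^ J - \<mu> ^ h) / (1 - \<mu>)" for h
  have S_le: "S h \<le> 1 / 2" if "h \<ge> J" for h
  proof -
    have "S h \<le> c * \<mu> ^ J / (1 - \<mu>)" unfolding S_def using c0 mp mu_lt_1
      by (intro divide_right_mono mult_left_mono) auto
    also have "\<dots> \<le> 1 / 2" by (rule S_le_gen[OF mu_lt_1 J])
    finally show ?thesis .
  qed
  have S_Suc: "S (Suc h) = S h + c * \<mu> ^ h" for h
    unfolding S_def by (rule S_Suc_gen[OF mu_lt_1])
  have vnn: "0 \<le> v h" for h using a_pos[of h] mp by simp
  have main: "v J * (1 - S h) \<le> v h" if "J \<le> h" for h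
    using that
  proof (induction h rule: dec_induct)
    case base then show ?case by (simp add: S_def)
  next
    case (step k)
    have x0: "0 \<le> c * \<mu> ^ k" using c0 mp by simp
    have x1: "c * \<mu> ^ k \<le> c * \<mu> ^ J"
      using c0 mp mu_lt_1 step(1) by (intro mult_left_mono power_decreasing) auto
    have x2a: "c * \<mu> ^ k < (1 - \<mu>) / 2" using x1 J by (rule le_less_trans)
    have x2b: "(1 - \<mu>) / 2 \<le> 1" using mp by simp
    have x2: "0 \<le> 1 - c * \<mu> ^ k" using x2a x2b by simp
    have "v J * (1 - S (Suc k)) \<le> v J * ((1 - S k) * (1 - c * \<mu> ^ k))"
    proof (intro mult_left_mono vnn)
      have pd: "\<mu> ^ k \<le> \<mu> ^ J" using step(1) mp mu_lt_1 by (intro power_decreasing) auto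
      have "0 \<le> S k" unfolding S_def using c0 pd mu_lt_1 by (intro divide_nonneg_pos mult_nonneg_nonneg) auto
      then have "0 \<le> S k * (c * \<mu> ^ k)" using x0 by simp
      then show "1 - S (Suc k) \<le> (1 - S k) * (1 - c * \<mu> ^ k)" by (simp add: S_Suc algebra_simps)
    qed
    also have "\<dots> = (v J * (1 - S k)) * (1 - c * \<mu> ^ k)" by simp
    also have "\<dots> \<le> v k * (1 - c * \<mu> ^ k)" using step(3) x2 by (intro mult_right_mono) auto
    also have "\<dots> \<le> v (Suc k)" using v_rec[of k] by (simp add: c_def)
    finally show ?case .
  qed
  show ?thesis
  proof (intro exI allI impI)
    fix h assume h: "J \<le> h"
    have "v J / 2 = v J * (1 - 1/2)" by simp
    also have "\<dots> \<le> v J * (1 - S h)" using S_le[OF h] vnn by (intro mult_left_mono) auto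
    also have "\<dots> \<le> v h" by (rule main[OF h])
    finally show "v J / 2 \<le> v h" .
  qed
qed

lemma final_ratio:
  assumes alpha: "(\<lambda>h. (a h / q) / \<mu> ^ h) \<longlonglongrightarrow> \<alpha>"
  shows "(\<lambda>h. (P h / (1 - q)) / ((\<alpha> * q * (m - \<mu>) / (1 - q)) * \<mu> ^ h)) \<longlonglongrightarrow> 1"
proof -
  have mp: "0 < \<mu>" by (rule mu_pos)
  have vlim: "v \<longlonglongrightarrow> q * \<alpha>"
  proof -
    have "(\<lambda>h. q * ((a h / q) / \<mu> ^ h)) \<longlonglongrightarrow> q * \<alpha>" by (intro tendsto_mult tendsto_const alpha)
    then show ?thesis using q_pos by simp
  qed
  obtain J where J: "\<forall>h\<ge>J. v J / 2 \<le> v h" using v_lower by blast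
  have "v J / 2 \<le> q * \<alpha>" by (rule LIMSEQ_le_const[OF vlim]) (use J in blast)
  moreover have "0 < v J" using a_pos[of J] mp by simp
  ultimately have qa: "0 < q * \<alpha>" by simp
  have mm: "0 < m - \<mu>" using mu_lt_m by simp
  have "(\<lambda>h. (P h / a h) * v h / ((m - \<mu>) * (q * \<alpha>))) \<longlonglongrightarrow> (m - \<mu>) * (q * \<alpha>) / ((m - \<mu>) * (q * \<alpha>))"
    by (intro tendsto_divide tendsto_mult P_ratio vlim tendsto_const) (use qa mm in auto)
  moreover have "(m - \<mu>) * (q * \<alpha>) / ((m - \<mu>) * (q * \<alpha>)) = 1" using qa mm by (metis divide_self less_irrefl mult_eq_0_iff)
  moreover have "(P h / a h) * v h / ((m - \<mu>) * (q * \<alpha>)) = (P h / (1 - q)) / ((\<alpha> * q * (m - \<mu>) / (1 - q)) * \<mu> ^ h)" for h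
  proof -
    have "a h \<noteq> 0" "\<mu> ^ h \<noteq> 0" "1 - q \<noteq> 0" "m - \<mu> \<noteq> 0" "q * \<alpha> \<noteq> 0"
      using a_pos[of h] mp q_lt_1 mm qa by auto
    then show ?thesis by (rule alg_id)
  qed
  ultimately show ?thesis by simp
qed

end

lemma th_ge_iff: "tree_height \<omega> \<ge> enat h \<longleftrightarrow> \<omega> \<notin> Th h"
proof
  assume a: "tree_height \<omega> \<ge> enat h"
  show "\<omega> \<notin> Th h"
  proof
    assume "\<omega> \<in> Th h"
    then have all: "\<forall>u\<in>gw_tree \<omega>. length u < h" by (simp add: Th_def)
    then have "h \<noteq> 0" using tree_Nil[of \<omega>] by fastforce
    then have "tree_height \<omega> \<le> enat (h - 1)"
      unfolding tree_height_def using all by (intro SUP_least) auto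
    then show False using a \<open>h \<noteq> 0\<close> by (cases "tree_height \<omega>") auto
  qed
next
  assume "\<omega> \<notin> Th h"
  then obtain u where u: "u \<in> gw_tree \<omega>" "h \<le> length u" by (auto simp: Th_def not_less)
  have "enat h \<le> enat (length u)" using u by simp
  also have "\<dots> \<le> tree_height \<omega>" unfolding tree_height_def using u by (intro SUP_upper) auto
  finally show "tree_height \<omega> \<ge> enat h" .
qed

lemma prob_th: "measure (gw_space r) {\<omega> \<in> space (gw_space r). tree_height \<omega> \<ge> enat h} = 1 - (gf r ^^ h) 0"
proof -
  interpret Q: prob_space "gw_space r" by (rule prob_gw)
  have "{\<omega> \<in> space (gw_space r). tree_height \<omega> \<ge> enat h} = space (gw_space r) - Th h"
    using th_ge_iff by auto
  then show ?thesis using Q.prob_compl[OF Th_sets] prob_Th by simp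
qed

lemma prob_surv: "measure (gw_space r) {\<omega> \<in> space (gw_space r). survives \<omega>} = 1 - ext_prob r"
proof -
  interpret Q: prob_space "gw_space r" by (rule prob_gw)
  have "{\<omega> \<in> space (gw_space r). survives \<omega>} = space (gw_space r) - Fin"
    by (auto simp: Fin_def survives_def)
  then show ?thesis using Q.prob_compl[OF Fin_sets] ext_prob_Fin by simp
qed

context gwp begin

lemma q_ext: assumes "q = ext_prob p" shows "pmf (Qlaw p) k = pmf p k * q ^ k / q"
proof -
  have qn: "q \<noteq> 0" using q_pos by simp
  have pw: "q powi (int k - 1) = q ^ k / q" for k
    using qn by (simp add: power_int_diff)
  have s: "(\<lambda>k. pmf p k * q ^ k / q) sums (f q / q)"
    using gf_sums[of q] q_range by (intro sums_divide) auto
  have nn: "\<And>k. 0 \<le> pmf p k * q ^ k / q" using q_range by simp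
  have "(\<integral>\<^sup>+k. ennreal (pmf p k * q ^ k / q) \<partial>count_space UNIV) = (\<Sum>k. ennreal (pmf p k * q ^ k / q))"
    by (rule nn_integral_count_space_nat)
  also have "\<dots> = ennreal (\<Sum>k. pmf p k * q ^ k / q)"
    using nn s by (intro suminf_ennreal2) (auto simp: sums_iff)
  also have "(\<Sum>k. pmf p k * q ^ k / q) = 1" using s gf_q qn by (simp add: sums_iff)
  finally have i: "(\<integral>\<^sup>+k. ennreal (pmf p k * q ^ k / q) \<partial>count_space UNIV) = 1" by simp
  have "pmf (Qlaw p) k = pmf (embed_pmf (\<lambda>k. pmf p k * q ^ k / q)) k"
    unfolding Qlaw_def assms[symmetric] pw by simp
  also have "\<dots> = pmf p k * q ^ k / q"
    by (rule pmf_embed_pmf[OF nn i])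
  finally show ?thesis .
qed

lemma gfQ: assumes "q = ext_prob p" "0 \<le> s" "s \<le> 1" shows "gf (Qlaw p) s = f (q * s) / q"
proof -
  have "(\<lambda>k. pmf p k * (q * s) ^ k / q) sums (f (q * s) / q)"
    using gf_sums[of "q * s"] q_range assms by (intro sums_divide) (auto intro: mult_le_one)
  moreover have "pmf (Qlaw p) k * s ^ k = pmf p k * (q * s) ^ k / q" for k
    using q_ext[OF assms(1)] by (simp add: power_mult_distrib)
  ultimately show ?thesis unfolding gf_def by (simp add: sums_iff)
qed

lemma eQ: assumes "q = ext_prob p" shows "(gf (Qlaw p) ^^ h) 0 = e h / q"
proof (induction h)
  case 0 then show ?case by simp
next
  case (Suc h)
  have r: "0 \<le> e h / q" "e h / q \<le> 1" using e_range[of h] e_le_q[of h] q_pos by auto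
  have "(gf (Qlaw p) ^^ Suc h) 0 = gf (Qlaw p) (e h / q)" using Suc by simp
  also have "\<dots> = f (q * (e h / q)) / q" by (rule gfQ[OF assms r])
  also have "q * (e h / q) = e h" using q_pos by simp
  finally show ?case by simp
qed

end

lemma lemma5_core:
  fixes p :: "nat pmf" and \<alpha> :: real
  assumes p0: "pmf p 0 > 0"
    and m_gt: "mean p > 1"
    and second_moment: "summable (\<lambda>k. (real k)\<^sup>2 * pmf p k)"
    and alpha: "(\<lambda>n. measure (gw_space (Qlaw p))
                    {\<omega> \<in> space (gw_space (Qlaw p)). tree_height \<omega> \<ge> enat n}
                  / gf_deriv p (ext_prob p) ^ n) \<longlonglongrightarrow> \<alpha>"
  shows "(\<lambda>h. Pcond p {\<omega> \<in> space (gw_space p). K0 \<omega> \<ge> ereal (real h)} /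
            ((\<alpha> * ext_prob p * (mean p - gf_deriv p (ext_prob p)) / (1 - ext_prob p))
              * gf_deriv p (ext_prob p) ^ h)) \<longlonglongrightarrow> 1"
    and "0 < gf_deriv p (ext_prob p)" "gf_deriv p (ext_prob p) < 1"
proof -
  interpret gwp p "ext_prob p"
    by unfold_locales (use second_moment p0 m_gt prob_Fin_lim[of p] ext_prob_Fin[of p] in auto)
  have al: "(\<lambda>h. (a h / ext_prob p) / \<mu> ^ h) \<longlonglongrightarrow> \<alpha>"
  proof -
    have "measure (gw_space (Qlaw p)) {\<omega> \<in> space (gw_space (Qlaw p)). tree_height \<omega> \<ge> enat h} = a h / ext_prob p" for h
      using prob_th[of "Qlaw p" h] eQ[OF refl, of h] q_pos by (simp add: field_simps)
    then show ?thesis using alpha by simp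
  qed
  have pc: "Pcond p {\<omega> \<in> space (gw_space p). K0 \<omega> \<ge> ereal (real h)} = P h / (1 - ext_prob p)" for h
  proof -
    have "{\<omega> \<in> space (gw_space p). K0 \<omega> \<ge> ereal (real h)} \<inter> {\<omega> \<in> space (gw_space p). survives \<omega>}
       = {\<omega>. survives \<omega> \<and> K0 \<omega> \<ge> ereal (real h)}" by auto
    then show ?thesis unfolding Pcond_def using prob_S[of p h] prob_surv[of p] by (simp add: P_def)
  qed
  show "(\<lambda>h. Pcond p {\<omega> \<in> space (gw_space p). K0 \<omega> \<ge> ereal (real h)} /
            ((\<alpha> * ext_prob p * (mean p - gf_deriv p (ext_prob p)) / (1 - ext_prob p))
              * gf_deriv p (ext_prob p) ^ h)) \<longlonglongrightarrow> 1"
    unfolding pc by (rule final_ratio[OF al])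
  show "0 < gf_deriv p (ext_prob p)" "gf_deriv p (ext_prob p) < 1" using mu_pos mu_lt_1 by auto
qed

lemma hn_lim:
  fixes \<mu> \<epsilon> :: real
  assumes "0 < \<mu>" "\<mu> < 1" "0 < \<epsilon>" "\<epsilon> < 1"
  shows "filterlim (\<lambda>n::nat. nat \<lceil>(1 - \<epsilon>) * ln (real n) / (- ln \<mu>)\<rceil>) at_top sequentially"
proof -
  define c where "c = (1 - \<epsilon>) / (- ln \<mu>)"
  have lnm: "ln \<mu> < 0" using assms by simp
  have c: "0 < c" unfolding c_def using assms lnm by (intro divide_pos_pos) auto
  have "filterlim (\<lambda>n::nat. ln (real n)) at_top sequentially"
    by (rule filterlim_compose[OF ln_at_top filterlim_real_sequentially])
  then have L: "filterlim (\<lambda>n::nat. c * ln (real n)) at_top sequentially"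
    by (rule filterlim_tendsto_pos_mult_at_top[OF tendsto_const c])
  show ?thesis unfolding filterlim_at_top
  proof
    fix Z :: nat
    from L have "eventually (\<lambda>n. real Z \<le> c * ln (real n)) sequentially"
      unfolding filterlim_at_top by blast
    then show "eventually (\<lambda>n. Z \<le> nat \<lceil>(1 - \<epsilon>) * ln (real n) / (- ln \<mu>)\<rceil>) sequentially"
    proof (rule eventually_mono)
      fix n :: nat assume h: "real Z \<le> c * ln (real n)"
      have "(1 - \<epsilon>) * ln (real n) / (- ln \<mu>) = c * ln (real n)" by (simp add: c_def)
      then have "real Z \<le> (1 - \<epsilon>) * ln (real n) / (- ln \<mu>)" using h by simp
      also have "\<dots> \<le> of_int \<lceil>(1 - \<epsilon>) * ln (real n) / (- ln \<mu>)\<rceil>" by (rule le_of_int_ceiling)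
      finally have "int Z \<le> \<lceil>(1 - \<epsilon>) * ln (real n) / (- ln \<mu>)\<rceil>" by linarith
      then show "Z \<le> nat \<lceil>(1 - \<epsilon>) * ln (real n) / (- ln \<mu>)\<rceil>" by linarith
    qed
  qed
qed

theorem lemma5:
  fixes p :: "nat pmf" and \<epsilon> \<alpha> :: real
  assumes p0: "pmf p 0 > 0"
    and m_gt: "mean p > 1"
    and second_moment: "summable (\<lambda>k. (real k)\<^sup>2 * pmf p k)"
    and eps: "0 < \<epsilon>" "\<epsilon> < 1"
    and alpha: "(\<lambda>n. measure (gw_space (Qlaw p))
                    {\<omega> \<in> space (gw_space (Qlaw p)). tree_height \<omega> \<ge> enat n}
                  / gf_deriv p (ext_prob p) ^ n) \<longlonglongrightarrow> \<alpha>"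
  shows "(\<lambda>n::nat. Pcond p {\<omega> \<in> space (gw_space p).
            K0 \<omega> \<ge> ereal (real (nat \<lceil>(1 - \<epsilon>) * ln (real n) / (- ln (gf_deriv p (ext_prob p)))\<rceil>))})
         \<sim>[at_top]
         (\<lambda>n::nat. (\<alpha> * ext_prob p * (mean p - gf_deriv p (ext_prob p)) / (1 - ext_prob p))
            * gf_deriv p (ext_prob p) ^ nat \<lceil>(1 - \<epsilon>) * ln (real n) / (- ln (gf_deriv p (ext_prob p)))\<rceil>)"
proof -
  note core = lemma5_core[OF p0 m_gt second_moment alpha]
  have hl: "filterlim (\<lambda>n::nat. nat \<lceil>(1 - \<epsilon>) * ln (real n) / (- ln (gf_deriv p (ext_prob p)))\<rceil>) at_top sequentially"
    by (rule hn_lim[OF core(2) core(3) eps])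
  show ?thesis
    by (rule asymp_equivI') (rule filterlim_compose[OF core(1) hl])
qed

end
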